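(* Let $n$ be a positive integer and let $\mathcal{H}_{DL;n}$ be the class of decision lists over $n$ Boolean variables. For any $\epsilon\in(2^{-n},1)$, the class $\mathcal{H}_{DL;n}$ is $\left(\min\left\{\frac{1}{200n^4},\epsilon\right\},\epsilon\right)$-separable.
   Context: The domain is $\mathcal{X}=\{0,1\}^n$. A decision list is a function $\mathcal{X}\to\{0,1\}$ of the form "if $\ell_1$ then $b_1$ else if $\ell_2$ then $b_2$ $\ldots$ else if $\ell_k$ then $b_k$ else $b_{k+1}$", where $\ell_1,\ldots,\ell_k$ are literals (variables $x_r$ or their negations) over the $n$ variables and $b_1,\ldots,b_{k+1}\in\{0,1\}$; $\mathcal{H}_{DL;n}$ is the set of all such functions. For a class $\mathcal{H}$ over finite domain $\mathcal{X}$, the hypotheses graph is bipartite with parts $\mathcal{H}$ and $\mathcal{X}$, $h$ adjacent to $x$ iff $h(x)=1$. For $S\subseteq\mathcal{X}$, $T\subseteq\mathcal{H}$, $d(S,T)=\frac{e(S,T)}{|S||T|}$ with $e(S,T)$ the number of edges between $S$ and $T$. Hypotheses $h_1,h_2$ are $\epsilon$-close if $|\{x\in\mathcal{X}: h_1(x)\ne h_2(x)\}|\le\epsilon|\mathcal{X}|$; $B_h(\epsilon)$ is the set of hypotheses $\epsilon$-close to $h$. $T\subseteq\mathcal{H}$ is $(\alpha,\epsilon)$-tight if some $h$ has $|T\cap B_h(\epsilon)|\ge\alpha|T|$. $\mathcal{H}$ is $(\alpha,\epsilon)$-separable if for every $T\subseteq\mathcal{H}$ that is not $(\alpha,\epsilon)$-tight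 there exist $S\subseteq\mathcal{X}$ and disjoint $T_0,T_1\subseteq T$ with $|S|\ge\alpha|\mathcal{X}|$, $|T_0|,|T_1|\ge\alpha|T|$ and $|d(S,T_0)-d(S,T_1)|\ge\alpha$. *)

theory Defs
  imports Main "HOL.Real"
begin

definition edges :: "'x set \<Rightarrow> ('x \<Rightarrow> bool) set \<Rightarrow> nat" where
  "edges S T = card {(x, h). x \<in> S \<and> h \<in> T \<and> h x}"

definition density :: "'x set \<Rightarrow> ('x \<Rightarrow> bool) set \<Rightarrow> real" where
  "density S T = real (edges S T) / (real (card S) * real (card T))"

definition eps_close :: "'x set \<Rightarrow> real \<Rightarrow> ('x \<Rightarrow> bool) \<Rightarrow> ('x \<Rightarrow> bool) \<Rightarrow> bool" where
  "eps_close X \<epsilon> h1 h2 \<longleftrightarrow> real (card {x \<in> X. h1 x \<noteq> h2 x}) \<le> \<epsilon> * real (card X)"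

definition ball_H :: "'x set \<Rightarrow> ('x \<Rightarrow> bool) set \<Rightarrow> real \<Rightarrow> ('x \<Rightarrow> bool) \<Rightarrow> ('x \<Rightarrow> bool) set" where
  "ball_H X H \<epsilon> h = {h' \<in> H. eps_close X \<epsilon> h h'}"

definition tight :: "'x set \<Rightarrow> ('x \<Rightarrow> bool) set \<Rightarrow> real \<Rightarrow> real \<Rightarrow> ('x \<Rightarrow> bool) set \<Rightarrow> bool" where
  "tight X H \<alpha> \<epsilon> T \<longleftrightarrow> (\<exists>h\<in>H. real (card (T \<inter> ball_H X H \<epsilon> h)) \<ge> \<alpha> * real (card T))"

definition separable :: "'x set \<Rightarrow> ('x \<Rightarrow> bool) set \<Rightarrow> real \<Rightarrow> real \<Rightarrow> bool" where
  "separable X H \<alpha> \<epsilon> \<longleftrightarrow>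
     (\<forall>T. T \<subseteq> H \<longrightarrow> \<not> tight X H \<alpha> \<epsilon> T \<longrightarrow>
        (\<exists>S T0 T1. S \<subseteq> X \<and> T0 \<subseteq> T \<and> T1 \<subseteq> T \<and> T0 \<inter> T1 = {} \<and>
           real (card S) \<ge> \<alpha> * real (card X) \<and>
           real (card T0) \<ge> \<alpha> * real (card T) \<and>
           real (card T1) \<ge> \<alpha> * real (card T) \<and>
           \<bar>density S T0 - density S T1\<bar> \<ge> \<alpha>))"

definition cube :: "nat \<Rightarrow> bool list set" where
  "cube n = {xs. length xs = n}"

(* a literal (r, p) is x_r if p = True and the negation of x_r if p = False *)
type_synonym literal = "nat \<times> bool"

definition lit_val :: "literal \<Rightarrow> bool list \<Rightarrow> bool" where
  "lit_val l x = (x ! fst l = snd l)"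

fun dl_eval :: "(literal \<times> bool) list \<Rightarrow> bool \<Rightarrow> bool list \<Rightarrow> bool" where
  "dl_eval [] d x = d"
| "dl_eval ((l, b) # rest) d x = (if lit_val l x then b else dl_eval rest d x)"

(* the class H_{DL;n}: functions on {0,1}^n (extended by False outside the domain,
   so distinct hypotheses are distinct functions on the domain) *)
definition H_DL :: "nat \<Rightarrow> (bool list \<Rightarrow> bool) set" where
  "H_DL n = {(\<lambda>x. if x \<in> cube n then dl_eval L d x else False) | L d.
              \<forall>lb \<in> set L. fst (fst lb) < n}"

end

theory Submission
  imports Defs
begin


definition subc :: "nat \<Rightarrow> (nat \<Rightarrow> bool option) \<Rightarrow> bool list set" where
  "subc n \<sigma> = {x \<in> cube n. \<forall>r<n. \<forall>b. \<sigma> r = Some b \<longrightarrow> x ! r = b}"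

definition freev :: "nat \<Rightarrow> (nat \<Rightarrow> bool option) \<Rightarrow> nat set" where
  "freev n \<sigma> = {r. r < n \<and> \<sigma> r = None}"

lemma finite_cube: "finite (cube n)"
proof -
  have "cube n = {xs. set xs \<subseteq> (UNIV::bool set) \<and> length xs = n}" by (auto simp: cube_def)
  thus ?thesis using finite_lists_length_eq[of "UNIV::bool set" n] by simp
qed

lemma cube_ne: "cube n \<noteq> {}"
  by (auto simp: cube_def intro!: exI[of _ "replicate n False"])

lemma card_cube_pos: "card (cube n) > 0"
  using finite_cube cube_ne by (simp add: card_gt_0_iff)

lemma subc_cube: "subc n \<sigma> \<subseteq> cube n" by (auto simp: subc_def)

lemma finite_subc: "finite (subc n \<sigma>)"
  using finite_subset[OF subc_cube finite_cube] .

lemma subc_None: "subc n (\<lambda>_. None) = cube n" by (auto simp: subc_def)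

lemma subc_upd: "r < n \<Longrightarrow> \<sigma> r = None \<Longrightarrow> subc n (\<sigma>(r := Some p)) = {x \<in> subc n \<sigma>. x ! r = p}"
  by (auto simp: subc_def split: if_splits)

lemma subc_upd_le: assumes "r < n" "\<sigma> r = None"
  shows "card (subc n (\<sigma>(r := Some p))) \<le> card (subc n (\<sigma>(r := Some q)))"
proof (cases "p = q")
  case True thus ?thesis by simp
next
  case False
  let ?f = "\<lambda>x::bool list. x[r := \<not> x ! r]"
  have "inj_on ?f (subc n (\<sigma>(r := Some p)))"
  proof (rule inj_onI)
    fix x y assume "x \<in> subc n (\<sigma>(r := Some p))" "y \<in> subc n (\<sigma>(r := Some p))" "?f x = ?f y"
    hence "x ! r = p" "y ! r = p"
      using assms by (auto simp: subc_upd subc_def cube_def)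
    have "x[r := p] = x" using \<open>x ! r = p\<close> list_update_id[of x r] by simp
    moreover have "y[r := p] = y" using \<open>y ! r = p\<close> list_update_id[of y r] by simp
    ultimately have "(?f x)[r := p] = x" "(?f y)[r := p] = y" by simp_all
    with \<open>?f x = ?f y\<close> show "x = y" by metis
  qed
  moreover have "?f ` subc n (\<sigma>(r := Some p)) \<subseteq> subc n (\<sigma>(r := Some q))"
  proof
    fix z assume "z \<in> ?f ` subc n (\<sigma>(r := Some p))"
    then obtain x where x: "x \<in> subc n (\<sigma>(r := Some p))" "z = ?f x" by auto
    hence xs: "x \<in> subc n \<sigma>" "x ! r = p" using assms by (auto simp: subc_upd)
    hence lx: "length x = n" by (auto simp: subc_def cube_def)
    have "z \<in> subc n \<sigma>" using xs lx x(2) assms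
      by (auto simp: subc_def cube_def nth_list_update)
    moreover have "z ! r = q" using x(2) xs lx assms False by auto
    ultimately show "z \<in> subc n (\<sigma>(r := Some q))" using assms by (simp add: subc_upd)
  qed
  ultimately show ?thesis using card_inj_on_le finite_subc by blast
qed

lemma subc_half: assumes "r < n" "\<sigma> r = None"
  shows "card (subc n \<sigma>) = 2 * card (subc n (\<sigma>(r := Some p)))"
proof -
  have e: "card (subc n (\<sigma>(r := Some p))) = card (subc n (\<sigma>(r := Some (\<not>p))))"
    using subc_upd_le[of r n \<sigma> p "\<not>p"] subc_upd_le[of r n \<sigma> "\<not>p" p] assms by simp
  have "subc n \<sigma> = subc n (\<sigma>(r := Some p)) \<union> subc n (\<sigma>(r := Some (\<not>p)))"
    using assms by (auto simp: subc_upd)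
  moreover have "subc n (\<sigma>(r := Some p)) \<inter> subc n (\<sigma>(r := Some (\<not>p))) = {}"
    using assms by (auto simp: subc_upd)
  ultimately have "card (subc n \<sigma>) = card (subc n (\<sigma>(r := Some p))) + card (subc n (\<sigma>(r := Some (\<not>p))))"
    using finite_subc card_Un_disjoint by metis
  thus ?thesis using e by simp
qed

lemma subc_upd_sub: "r < n \<Longrightarrow> \<sigma> r = None \<Longrightarrow> subc n (\<sigma>(r := Some p)) \<subseteq> subc n \<sigma>"
  by (auto simp: subc_upd)

lemma subc_nofree: assumes "freev n \<sigma> = {}" shows "card (subc n \<sigma>) \<le> 1"
proof -
  have "\<forall>a1\<in>subc n \<sigma>. \<forall>a2\<in>subc n \<sigma>. a1 = a2"
  proof (intro ballI)
    fix x y assume xy: "x \<in> subc n \<sigma>" "y \<in> subc n \<sigma>"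
    show "x = y"
    proof (rule nth_equalityI)
      show "length x = length y" using xy by (auto simp: subc_def cube_def)
      fix i assume "i < length x"
      hence i: "i < n" using xy by (auto simp: subc_def cube_def)
      then obtain b where "\<sigma> i = Some b" using assms by (auto simp: freev_def)
      thus "x ! i = y ! i" using xy i by (auto simp: subc_def)
    qed
  qed
  thus ?thesis using card_le_Suc0_iff_eq[OF finite_subc] by simp
qed

lemma freev_upd: "r < n \<Longrightarrow> \<sigma> r = None \<Longrightarrow> freev n (\<sigma>(r := Some p)) = freev n \<sigma> - {r}"
  by (auto simp: freev_def)

lemma finite_freev: "finite (freev n \<sigma>)"
  by (rule finite_subset[of _ "{..<n}"]) (auto simp: freev_def)

lemma card_freev_upd: "r < n \<Longrightarrow> \<sigma> r = None \<Longrightarrow> card (freev n (\<sigma>(r := Some p))) = card (freev n \<sigma>) - 1"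
  using freev_upd finite_freev by (simp add: freev_def)

lemma card_freev_le: "card (freev n \<sigma>) \<le> n"
  using card_mono[of "{..<n}" "freev n \<sigma>"] by (auto simp: freev_def)

lemma dl_struct_aux:
  "(\<forall>lb\<in>set L. fst (fst lb) < n) \<Longrightarrow>
   (\<exists>b. \<forall>x\<in>subc n \<sigma>. dl_eval L d x = b) \<or>
   (\<exists>r p b. r < n \<and> \<sigma> r = None \<and> (\<forall>x\<in>subc n \<sigma>. x ! r = p \<longrightarrow> dl_eval L d x = b))"
proof (induction L)
  case Nil thus ?case by auto
next
  case (Cons lb rest)
  obtain r p b where lb: "lb = ((r, p), b)" by (metis prod.collapse)
  have rn: "r < n" using Cons.prems lb by auto
  show ?case
  proof (cases "\<sigma> r")
    case None
    thus ?thesis using rn lb by (intro disjI2 exI[of _ r] exI[of _ p] exI[of _ b]) (auto simp: lit_val_def)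
  next
    case (Some q)
    hence xq: "\<forall>x\<in>subc n \<sigma>. x ! r = q" using rn by (auto simp: subc_def)
    show ?thesis
    proof (cases "q = p")
      case True
      thus ?thesis using xq lb by (intro disjI1 exI[of _ b]) (auto simp: lit_val_def)
    next
      case False
      hence ev: "\<forall>x\<in>subc n \<sigma>. dl_eval (lb # rest) d x = dl_eval rest d x"
        using xq lb by (auto simp: lit_val_def)
      have "(\<exists>b. \<forall>x\<in>subc n \<sigma>. dl_eval rest d x = b) \<or>
        (\<exists>r p b. r < n \<and> \<sigma> r = None \<and> (\<forall>x\<in>subc n \<sigma>. x ! r = p \<longrightarrow> dl_eval rest d x = b))"
        using Cons by auto
      thus ?thesis using ev by auto
    qed
  qed
qed

lemma dl_struct:
  assumes "h \<in> H_DL n"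
  shows "(\<exists>b. \<forall>x\<in>subc n \<sigma>. h x = b) \<or>
   (\<exists>r p b. r < n \<and> \<sigma> r = None \<and> (\<forall>x\<in>subc n \<sigma>. x ! r = p \<longrightarrow> h x = b))"
proof -
  obtain L d where h: "h = (\<lambda>x. if x \<in> cube n then dl_eval L d x else False)"
    and L: "\<forall>lb \<in> set L. fst (fst lb) < n" using assms by (auto simp: H_DL_def)
  have eq: "\<forall>x\<in>subc n \<sigma>. h x = dl_eval L d x" using h subc_cube by auto
  show ?thesis using dl_struct_aux[OF L, of \<sigma> d] eq by auto
qed

lemma edges_sum: assumes "finite S" "finite U"
  shows "edges S U = (\<Sum>h\<in>U. card {x\<in>S. h x})"
proof -
  have "{(x, h). x \<in> S \<and> h \<in> U \<and> h x} = (\<lambda>(h, x). (x, h)) ` (SIGMA h:U. {x\<in>S. h x})"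
    by auto
  moreover have "inj_on (\<lambda>(h, x). (x, h)) (SIGMA h:U. {x\<in>S. h x})"
    by (auto simp: inj_on_def)
  ultimately have "edges S U = card (SIGMA h:U. {x\<in>S. h x})"
    by (simp add: edges_def card_image)
  also have "\<dots> = (\<Sum>h\<in>U. card {x\<in>S. h x})"
    using assms by (simp add: card_SigmaI)
  finally show ?thesis .
qed

lemma pigeon:
  assumes "finite K" "K \<noteq> {}" "finite A" "\<forall>a\<in>A. f a \<in> K"
  shows "\<exists>k\<in>K. card A \<le> card K * card {a\<in>A. f a = k}"
proof (rule ccontr)
  assume "\<not> ?thesis"
  hence lt: "\<forall>k\<in>K. card K * card {a\<in>A. f a = k} < card A" by auto
  have "card A = (\<Sum>k\<in>K. card {a\<in>A. f a = k})"
    using card_UN_disjoint[of K "\<lambda>k. {a\<in>A. f a = k}"] assms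
    by (subst card_UN_disjoint[symmetric]) (auto intro!: arg_cong[of _ _ card])
  hence "card K * card A = (\<Sum>k\<in>K. card K * card {a\<in>A. f a = k})"
    by (simp add: sum_distrib_left)
  also have "\<dots> < (\<Sum>k\<in>K. card A)"
    using lt assms by (intro sum_strict_mono) auto
  finally show False by simp
qed



locale ctx =
  fixes n :: nat and \<alpha> :: real and T :: "(bool list \<Rightarrow> bool) set"
  assumes n1: "n \<ge> 1" and apos: "0 < \<alpha>" and asmall: "\<alpha> \<le> 1 / (200 * real n ^ 4)"
    and TH: "T \<subseteq> H_DL n" and Tfin: "finite T" and Tne: "T \<noteq> {}"
    and nosep: "\<And>S T0 T1. S \<subseteq> cube n \<Longrightarrow> T0 \<subseteq> T \<Longrightarrow> T1 \<subseteq> T \<Longrightarrow> T0 \<inter> T1 = {} \<Longrightarrow>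
        \<alpha> * real (card (cube n)) \<le> real (card S) \<Longrightarrow> \<alpha> * real (card T) \<le> real (card T0) \<Longrightarrow>
        \<alpha> * real (card T) \<le> real (card T1) \<Longrightarrow> \<bar>density S T0 - density S T1\<bar> < \<alpha>"
begin

abbreviation NN where "NN \<equiv> real (card (cube n))"

lemma NN_pos: "NN > 0" using card_cube_pos by simp

lemma cardT_pos: "real (card T) > 0" using Tfin Tne by (simp add: card_gt_0_iff)

lemma n4: "real n ^ 4 \<ge> 1" using n1 by simp

lemma a_le: "\<alpha> \<le> 1/200"
proof -
  have "1 / (200 * real n ^ 4) \<le> 1 / 200" using n4 n1 by (intro divide_left_mono) auto
  thus ?thesis using asmall by linarith
qed

lemma a_n4: "\<alpha> * real n ^ 4 \<le> 1/200"
proof -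
  have "\<alpha> * real n ^ 4 \<le> 1 / (200 * real n ^ 4) * real n ^ 4"
    using asmall n4 by (intro mult_right_mono) auto
  thus ?thesis using n4 n1 by simp
qed

lemma D0:
  assumes S: "S \<subseteq> cube n" "\<alpha> * NN \<le> real (card S)"
    and G: "G \<subseteq> T" "\<alpha> * card T \<le> real (card G)" "\<forall>h\<in>G. \<forall>x\<in>S. h x = b"
    and F: "F \<subseteq> T" "\<forall>h\<in>F. \<alpha> * card S \<le> real (card {x\<in>S. h x \<noteq> b})"
  shows "real (card F) < \<alpha> * card T"
proof (rule ccontr)
  assume "\<not> ?thesis"
  hence Fge: "\<alpha> * card T \<le> real (card F)" by simp
  have finS: "finite S" using finite_subset[OF S(1) finite_cube] .
  have finG: "finite G" "finite F" using finite_subset[OF G(1) Tfin] finite_subset[OF F(1) Tfin] by auto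
  have Spos: "real (card S) > 0" using S(2) mult_pos_pos[OF apos NN_pos] by linarith
  have Gpos: "real (card G) > 0" using G(2) mult_pos_pos[OF apos cardT_pos] by linarith
  have Fpos: "real (card F) > 0" using Fge mult_pos_pos[OF apos cardT_pos] by linarith
  have disj: "G \<inter> F = {}"
  proof (rule ccontr)
    assume "G \<inter> F \<noteq> {}"
    then obtain h where h: "h \<in> G" "h \<in> F" by auto
    have "{x\<in>S. h x \<noteq> b} = {}" using h G by auto
    moreover have "\<alpha> * real (card S) \<le> real (card {x\<in>S. h x \<noteq> b})" using h F(2) by blast
    ultimately show False using mult_pos_pos[OF apos Spos] by (simp only: card.empty of_nat_0)
  qed
  have ns: "\<bar>density S G - density S F\<bar> < \<alpha>"
    using nosep[OF S(1) G(1) F(1) disj S(2) G(2) Fge] .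
  have eG: "real (edges S G) = (\<Sum>h\<in>G. real (card {x\<in>S. h x}))"
    using edges_sum[OF finS finG(1)] by simp
  have eF: "real (edges S F) = (\<Sum>h\<in>F. real (card {x\<in>S. h x}))"
    using edges_sum[OF finS finG(2)] by simp
  show False
  proof (cases b)
    case True
    have "\<forall>h\<in>G. {x\<in>S. h x} = S" using G True by auto
    hence "real (edges S G) = real (card G) * real (card S)" using eG by simp
    hence dG: "density S G = 1" using Spos Gpos by (simp add: density_def)
    have "\<forall>h\<in>F. real (card {x\<in>S. h x}) \<le> (1 - \<alpha>) * real (card S)"
    proof
      fix h assume h: "h \<in> F"
      have "card {x\<in>S. h x} + card {x\<in>S. h x \<noteq> b} = card S"
        using True finS by (subst card_Un_disjoint[symmetric]) (auto intro: arg_cong[of _ _ card])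
      hence "real (card {x\<in>S. h x}) = real (card S) - real (card {x\<in>S. h x \<noteq> b})"
        by linarith
      also have "\<dots> \<le> real (card S) - \<alpha> * real (card S)" using F(2) h by auto
      finally show "real (card {x\<in>S. h x}) \<le> (1 - \<alpha>) * real (card S)"
        by (simp add: algebra_simps)
    qed
    hence "real (edges S F) \<le> real (card F) * ((1 - \<alpha>) * real (card S))"
      using eF sum_mono[of F "\<lambda>h. real (card {x\<in>S. h x})" "\<lambda>h. (1 - \<alpha>) * real (card S)"] by simp
    hence "density S F \<le> 1 - \<alpha>" using Spos Fpos
      by (simp add: density_def divide_le_eq mult.commute mult.left_commute)
    thus False using dG ns by linarith
  next
    case False
    have "\<forall>h\<in>G. card {x\<in>S. h x} = 0" using G False by (auto simp: card_eq_0_iff)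
    hence "(\<Sum>h\<in>G. real (card {x\<in>S. h x})) = (\<Sum>h\<in>G. 0)"
      by (intro sum.cong) auto
    hence "real (edges S G) = 0" using eG by simp
    hence dG: "density S G = 0" by (simp add: density_def)
    have "\<forall>h\<in>F. \<alpha> * real (card S) \<le> real (card {x\<in>S. h x})"
      using F(2) False by auto
    hence "real (card F) * (\<alpha> * real (card S)) \<le> real (edges S F)"
      using eF sum_mono[of F "\<lambda>h. \<alpha> * real (card S)" "\<lambda>h. real (card {x\<in>S. h x})"] by simp
    hence "\<alpha> \<le> density S F" using Spos Fpos
      by (simp add: density_def le_divide_eq mult.commute mult.left_commute)
    thus False using dG ns by linarith
  qed
qed

end


primrec camp :: "real \<Rightarrow> nat \<Rightarrow> real" where
  "camp m 0 = 1"
| "camp m (Suc j) = 1 + m * camp m j"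

lemma camp_nonneg: "m \<ge> 0 \<Longrightarrow> camp m j \<ge> 0"
  by (induction j) auto

context ctx begin

lemma a_lt1: "\<alpha> < 1/2" using a_le by simp

lemma amp:
  assumes G: "G \<subseteq> T" "\<alpha> * card T \<le> real (card G)"
  shows "\<forall>\<sigma> F. 2^j * \<alpha> * NN \<le> real (card (subc n \<sigma>)) \<longrightarrow> (\<forall>h\<in>G. \<forall>x\<in>subc n \<sigma>. h x = b) \<longrightarrow> F \<subseteq> T \<longrightarrow>
    (\<forall>h\<in>F. \<alpha> * card (subc n \<sigma>) \<le> 2^j * real (card {x\<in>subc n \<sigma>. h x \<noteq> b})) \<longrightarrow>
    real (card F) < camp (2 * real n) j * \<alpha> * card T"
proof (induction j)
  case 0
  show ?case
  proof (intro allI impI)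
    fix \<sigma> F
    assume a: "2^0 * \<alpha> * NN \<le> real (card (subc n \<sigma>))" "\<forall>h\<in>G. \<forall>x\<in>subc n \<sigma>. h x = b" "F \<subseteq> T"
      "\<forall>h\<in>F. \<alpha> * card (subc n \<sigma>) \<le> 2^0 * real (card {x\<in>subc n \<sigma>. h x \<noteq> b})"
    show "real (card F) < camp (2 * real n) 0 * \<alpha> * card T"
      using D0[OF subc_cube _ G a(2) a(3)] a(1) a(4) by simp
  qed
next
  case (Suc j)
  show ?case
  proof (intro allI impI)
    fix \<sigma> F
    let ?P = "subc n \<sigma>"
    assume a: "2^Suc j * \<alpha> * NN \<le> real (card ?P)" "\<forall>h\<in>G. \<forall>x\<in>?P. h x = b" "F \<subseteq> T"
      "\<forall>h\<in>F. \<alpha> * card ?P \<le> 2^Suc j * real (card {x\<in>?P. h x \<noteq> b})"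
    have finF: "finite F" using finite_subset[OF a(3) Tfin] .
    have aNN: "\<alpha> * NN > 0" using apos NN_pos by simp
    have "1 * (\<alpha> * NN) \<le> 2^Suc j * (\<alpha> * NN)"
      by (rule mult_right_mono) (use aNN one_le_power[of "2::real" "Suc j"] in auto)
    hence "\<alpha> * NN \<le> 2^Suc j * \<alpha> * NN" by (simp add: mult.assoc)
    hence Pge: "\<alpha> * NN \<le> real (card ?P)" using a(1) by linarith
    have Ppos: "real (card ?P) > 0" using Pge aNN by linarith
    define F0 where "F0 = {h\<in>F. \<alpha> * card ?P \<le> real (card {x\<in>?P. h x \<noteq> b})}"
    define Fr where "Fr = F - F0"
    have cF0: "real (card F0) < \<alpha> * card T"
      using D0[OF subc_cube Pge G a(2), of F0] a(3) by (auto simp: F0_def)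
    have lit: "\<exists>rp. rp \<in> {0..<n} \<times> (UNIV::bool set) \<and>
        (\<forall>x\<in>?P. x ! fst rp = snd rp \<longrightarrow> h x = b) \<and> \<sigma> (fst rp) = None" if h: "h \<in> Fr" for h
    proof -
      have hT: "h \<in> H_DL n" using h a(3) TH by (auto simp: Fr_def)
      let ?e = "real (card {x\<in>?P. h x \<noteq> b})"
      have elt: "?e < \<alpha> * card ?P" using h by (auto simp: Fr_def F0_def)
      have ege: "\<alpha> * card ?P \<le> 2^Suc j * ?e" using h a(4) by (auto simp: Fr_def)
      have epos: "?e > 0"
      proof -
        have "\<alpha> * card ?P > 0" using apos Ppos by simp
        hence "2^Suc j * ?e > 0" using ege by linarith
        thus ?thesis by (simp add: zero_less_mult_iff)
      qed
      show ?thesis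
      proof (cases "\<exists>b'. \<forall>x\<in>?P. h x = b'")
        case True
        then obtain b' where b': "\<forall>x\<in>?P. h x = b'" by auto
        show ?thesis
        proof (cases "b' = b")
          case True
          hence "{x\<in>?P. h x \<noteq> b} = {}" using b' by auto
          hence "?e = 0" by (simp only: card.empty of_nat_0)
          thus ?thesis using epos by linarith
        next
          case False
          hence "{x\<in>?P. h x \<noteq> b} = ?P" using b' by auto
          hence "?e = card ?P" by simp
          moreover have "\<alpha> * card ?P < 1 * real (card ?P)"
            using a_lt1 Ppos by (intro mult_strict_right_mono) auto
          ultimately show ?thesis using elt by linarith
        qed
      next
        case False
        then obtain r p b' where rpb: "r < n" "\<sigma> r = None" "\<forall>x\<in>?P. x ! r = p \<longrightarrow> h x = b'"
          using dl_struct[OF hT, of \<sigma>] by blast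
        show ?thesis
        proof (cases "b' = b")
          case True
          thus ?thesis using rpb by (intro exI[of _ "(r, p)"]) auto
        next
          case False
          have sub: "subc n (\<sigma>(r := Some p)) \<subseteq> {x\<in>?P. h x \<noteq> b}"
            using rpb False by (auto simp: subc_upd)
          have "card (subc n (\<sigma>(r := Some p))) \<le> card {x\<in>?P. h x \<noteq> b}"
            using card_mono[OF _ sub] finite_subc[of n \<sigma>] by simp
          moreover have "card ?P = 2 * card (subc n (\<sigma>(r := Some p)))"
            using subc_half[of r n \<sigma> p] rpb(1,2) by simp
          ultimately have "real (card ?P) \<le> 2 * ?e" by linarith
          hence "real (card ?P) < 2 * (\<alpha> * card ?P)" using elt by linarith
          moreover have "(2 * \<alpha>) * card ?P < 1 * real (card ?P)"
            using a_lt1 Ppos by (intro mult_strict_right_mono) auto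
          ultimately show ?thesis by simp
        qed
      qed
    qed
    have ex: "\<forall>h\<in>Fr. \<exists>rp. rp \<in> {0..<n} \<times> (UNIV::bool set) \<and>
        (\<forall>x\<in>?P. x ! fst rp = snd rp \<longrightarrow> h x = b) \<and> \<sigma> (fst rp) = None"
      using lit by blast
    from bchoice[OF ex] obtain f where f: "\<forall>h\<in>Fr. f h \<in> {0..<n} \<times> (UNIV::bool set) \<and>
        (\<forall>x\<in>?P. x ! fst (f h) = snd (f h) \<longrightarrow> h x = b) \<and> \<sigma> (fst (f h)) = None" ..
    have finFr: "finite Fr" using finF by (simp add: Fr_def)
    have Kne: "{0..<n} \<times> (UNIV::bool set) \<noteq> {}" using n1 by auto
    have cardK: "card ({0..<n} \<times> (UNIV::bool set)) = 2 * n" by (simp add: card_cartesian_product)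
    have finK: "finite ({0..<n} \<times> (UNIV::bool set))" by simp
    have fK: "\<forall>h\<in>Fr. f h \<in> {0..<n} \<times> (UNIV::bool set)" using f by blast
    obtain rp where rp: "rp \<in> {0..<n} \<times> (UNIV::bool set)"
      "card Fr \<le> card ({0..<n} \<times> (UNIV::bool set)) * card {h\<in>Fr. f h = rp}"
      using pigeon[OF finK Kne finFr fK] by blast
    obtain r' p' where rp': "rp = (r', p')" by (metis prod.collapse)
    define Kc where "Kc = {h\<in>Fr. f h = rp}"
    have "card Fr \<le> 2 * n * card Kc" using rp(2) cardK by (simp add: Kc_def)
    hence cFr: "real (card Fr) \<le> 2 * real n * card Kc" using of_nat_mono by fastforce
    have cKc: "real (card Kc) \<le> camp (2 * real n) j * \<alpha> * card T"
    proof (cases "Kc = {}")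
      case True
      thus ?thesis using camp_nonneg[of "2 * real n" j] apos cardT_pos by simp
    next
      case False
      then obtain h0 where "h0 \<in> Kc" by auto
      hence r'free: "r' < n" "\<sigma> r' = None" using f rp' by (auto simp: Kc_def)
      let ?\<sigma>' = "\<sigma>(r' := Some (\<not> p'))"
      let ?P' = "subc n ?\<sigma>'"
      have half: "card ?P = 2 * card ?P'" using subc_half[of r' n \<sigma> "\<not> p'"] r'free by simp
      have P'sub: "?P' \<subseteq> ?P" using subc_upd_sub[of r' n \<sigma> "\<not> p'"] r'free by simp
      have same: "{x\<in>?P'. h x \<noteq> b} = {x\<in>?P. h x \<noteq> b}" if "h \<in> Kc" for h
      proof -
        have "\<forall>x\<in>?P. x ! r' = p' \<longrightarrow> h x = b" using f that rp' by (auto simp: Kc_def)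
        thus ?thesis using r'free by (auto simp: subc_upd)
      qed
      have c1: "2^j * \<alpha> * NN \<le> real (card ?P')" using a(1) half by simp
      have c2: "\<forall>h\<in>G. \<forall>x\<in>?P'. h x = b" using a(2) P'sub by auto
      have c3: "Kc \<subseteq> T" using a(3) by (auto simp: Kc_def Fr_def)
      have c4: "\<forall>h\<in>Kc. \<alpha> * card ?P' \<le> 2^j * real (card {x\<in>?P'. h x \<noteq> b})"
      proof
        fix h assume h: "h \<in> Kc"
        have "\<alpha> * card ?P \<le> 2^Suc j * real (card {x\<in>?P. h x \<noteq> b})"
          using h a(4) by (auto simp: Kc_def Fr_def)
        thus "\<alpha> * card ?P' \<le> 2^j * real (card {x\<in>?P'. h x \<noteq> b})"
          using same[OF h] half by simp
      qed
      show ?thesis using Suc.IH[THEN spec, THEN spec, THEN mp, THEN mp, THEN mp, THEN mp, OF c1 c2 c3 c4] by simp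
    qed
    have FU: "F = F0 \<union> Fr" by (auto simp: Fr_def F0_def)
    have FD: "F0 \<inter> Fr = {}" by (auto simp: Fr_def)
    have fF0: "finite F0" using finF by (simp add: F0_def)
    have "card (F0 \<union> Fr) = card F0 + card Fr" by (rule card_Un_disjoint[OF fF0 finFr FD])
    hence "card F = card F0 + card Fr" using FU by simp
    hence "real (card F) < \<alpha> * card T + 2 * real n * (camp (2 * real n) j * \<alpha> * card T)"
      using cF0 cFr cKc mult_left_mono[OF cKc, of "2 * real n"] by simp
    thus "real (card F) < camp (2 * real n) (Suc j) * \<alpha> * card T"
      by (simp add: algebra_simps)
  qed
qed

end


context ctx begin

lemma exact: "\<forall>\<sigma> M. finite M \<longrightarrow> M \<subseteq> H_DL n \<longrightarrow> (\<exists>L d M'. M' \<subseteq> M \<and> card M \<le> card M' * (4*n+4)^j \<and>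
   (\<forall>lb\<in>set L. fst (fst lb) < n) \<and>
   (\<forall>h\<in>M'. real (card {x\<in>subc n \<sigma>. h x \<noteq> dl_eval L d x}) * 2^j \<le> real (card (subc n \<sigma>))))"
proof (induction j)
  case 0
  show ?case
  proof (intro allI impI)
    fix \<sigma> and M :: "(bool list \<Rightarrow> bool) set"
    assume "finite M" "M \<subseteq> H_DL n"
    have "\<forall>h\<in>M. card {x\<in>subc n \<sigma>. h x \<noteq> dl_eval [] False x} \<le> card (subc n \<sigma>)"
      using finite_subc by (auto intro: card_mono)
    thus "\<exists>L d M'. M' \<subseteq> M \<and> card M \<le> card M' * (4*n+4)^0 \<and>
       (\<forall>lb\<in>set L. fst (fst lb) < n) \<and>
       (\<forall>h\<in>M'. real (card {x\<in>subc n \<sigma>. h x \<noteq> dl_eval L d x}) * 2^0 \<le> real (card (subc n \<sigma>)))"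
      by (intro exI[of _ "[]"] exI[of _ False] exI[of _ M]) auto
  qed
next
  case (Suc j)
  show ?case
  proof (intro allI impI)
    fix \<sigma> and M :: "(bool list \<Rightarrow> bool) set"
    assume finM: "finite M" and MH: "M \<subseteq> H_DL n"
    let ?C = "subc n \<sigma>"
    let ?K = "{0..n} \<times> (UNIV::bool set) \<times> (UNIV::bool set)"
    let ?Q = "\<lambda>h t. (fst t = n \<and> (\<forall>x\<in>?C. h x = snd (snd t))) \<or>
        (fst t < n \<and> \<sigma> (fst t) = None \<and> (\<forall>x\<in>?C. x ! fst t = fst (snd t) \<longrightarrow> h x = snd (snd t)))"
    show "\<exists>L d M'. M' \<subseteq> M \<and> card M \<le> card M' * (4*n+4)^Suc j \<and>
       (\<forall>lb\<in>set L. fst (fst lb) < n) \<and>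
       (\<forall>h\<in>M'. real (card {x\<in>?C. h x \<noteq> dl_eval L d x}) * 2^Suc j \<le> real (card ?C))"
    proof (cases "M = {}")
      case True
      thus ?thesis by (intro exI[of _ "[]"] exI[of _ False] exI[of _ "{}"]) auto
    next
      case Mne: False
      have ex: "\<forall>h\<in>M. \<exists>t. t \<in> ?K \<and> ?Q h t"
      proof
        fix h assume "h \<in> M"
        hence "h \<in> H_DL n" using MH by auto
        from dl_struct[OF this, of \<sigma>] show "\<exists>t. t \<in> ?K \<and> ?Q h t"
        proof
          assume "\<exists>b. \<forall>x\<in>?C. h x = b"
          then obtain b where "\<forall>x\<in>?C. h x = b" by blast
          thus ?thesis by (intro exI[of _ "(n, True, b)"]) auto
        next
          assume "\<exists>r p b. r < n \<and> \<sigma> r = None \<and> (\<forall>x\<in>?C. x ! r = p \<longrightarrow> h x = b)"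
          then obtain r p b where "r < n \<and> \<sigma> r = None \<and> (\<forall>x\<in>?C. x ! r = p \<longrightarrow> h x = b)" by blast
          thus ?thesis by (intro exI[of _ "(r, p, b)"]) auto
        qed
      qed
      from bchoice[OF ex] obtain f where f: "\<forall>h\<in>M. f h \<in> ?K \<and> ?Q h (f h)" ..
      have finK: "finite ?K" by simp
      have Kne: "?K \<noteq> {}" by auto
      have u4: "(UNIV :: (bool \<times> bool) set) = {(False,False),(False,True),(True,False),(True,True)}"
        by auto
      have "card (UNIV :: (bool \<times> bool) set) = 4" by (simp add: u4)
      hence cardK: "card ?K = 4*n+4" by (simp add: card_cartesian_product)
      have fK: "\<forall>h\<in>M. f h \<in> ?K" using f by blast
      obtain t where t: "t \<in> ?K" "card M \<le> card ?K * card {h\<in>M. f h = t}"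
        using pigeon[OF finK Kne finM fK] by blast
      obtain r p b where rpb: "t = (r, p, b)" by (metis prod.collapse)
      define G where "G = {h\<in>M. f h = t}"
      have cG: "card M \<le> (4*n+4) * card G" using t cardK by (simp add: G_def)
      have finG: "finite G" using finM by (simp add: G_def)
      have Gne: "G \<noteq> {}"
      proof
        assume "G = {}"
        hence "card M = 0" using cG by simp
        thus False using finM Mne by simp
      qed
      have GM: "G \<subseteq> M" by (auto simp: G_def)
      have Gq: "\<forall>h\<in>G. ?Q h (r, p, b)" using f rpb by (auto simp: G_def)
      have pw: "(1::nat) \<le> (4*n+4)^j" by simp
      show ?thesis
      proof (cases "r = n")
        case True
        have cst: "\<forall>h\<in>G. \<forall>x\<in>?C. h x = b" using Gq True by auto
        have "card M \<le> card G * (4*n+4)^Suc j"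
        proof -
          have "(4*n+4) * card G \<le> (4*n+4) * card G * (4*n+4)^j" using pw by simp
          thus ?thesis using cG by (simp add: algebra_simps)
        qed
        moreover have "\<forall>h\<in>G. card {x\<in>?C. h x \<noteq> dl_eval [] b x} = 0"
          using cst by (auto simp: card_eq_0_iff)
        ultimately show ?thesis using GM
          by (intro exI[of _ "[]"] exI[of _ b] exI[of _ G]) auto
      next
        case False
        obtain h0 where "h0 \<in> G" using Gne by auto
        hence rfree: "r < n" "\<sigma> r = None" using Gq False by auto
        have pc: "\<forall>h\<in>G. \<forall>x\<in>?C. x ! r = p \<longrightarrow> h x = b" using Gq False by auto
        let ?\<sigma>' = "\<sigma>(r := Some (\<not> p))"
        have finG': "finite G" "G \<subseteq> H_DL n" using finG GM MH by auto
        obtain L' d M' where IH0: "M' \<subseteq> G \<and> card G \<le> card M' * (4*n+4)^j \<and>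
          (\<forall>lb\<in>set L'. fst (fst lb) < n) \<and>
          (\<forall>h\<in>M'. real (card {x\<in>subc n ?\<sigma>'. h x \<noteq> dl_eval L' d x}) * 2^j \<le> real (card (subc n ?\<sigma>')))"
          using Suc.IH[THEN spec[of _ ?\<sigma>'], THEN spec[of _ G], THEN mp, THEN mp, OF finG'] by (elim exE) (rule that, assumption)
        note IH = IH0[THEN conjunct1] IH0[THEN conjunct2, THEN conjunct1]
          IH0[THEN conjunct2, THEN conjunct2, THEN conjunct1] IH0[THEN conjunct2, THEN conjunct2, THEN conjunct2]
        let ?L = "((r, p), b) # L'"
        have half: "card ?C = 2 * card (subc n ?\<sigma>')" using subc_half[of r n \<sigma> "\<not> p"] rfree by simp
        have cM: "card M \<le> card M' * (4*n+4)^Suc j"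
        proof -
          have "(4*n+4) * card G \<le> (4*n+4) * (card M' * (4*n+4)^j)" using IH(2) by simp
          thus ?thesis using cG by (simp add: algebra_simps)
        qed
        have err: "real (card {x\<in>?C. h x \<noteq> dl_eval ?L d x}) * 2^Suc j \<le> real (card ?C)"
          if h: "h \<in> M'" for h
        proof -
          have "{x\<in>?C. h x \<noteq> dl_eval ?L d x} \<subseteq> {x\<in>subc n ?\<sigma>'. h x \<noteq> dl_eval L' d x}"
          proof
            fix x assume x: "x \<in> {x\<in>?C. h x \<noteq> dl_eval ?L d x}"
            show "x \<in> {x\<in>subc n ?\<sigma>'. h x \<noteq> dl_eval L' d x}"
            proof (cases "x ! r = p")
              case True
              have hG: "h \<in> G" using IH(1) h by blast
              have xC: "x \<in> ?C" using x by simp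
              have "h x = b" using pc hG xC True by blast
              thus ?thesis using x True by (auto simp: lit_val_def)
            next
              case False
              thus ?thesis using x rfree by (auto simp: lit_val_def subc_upd)
            qed
          qed
          hence "card {x\<in>?C. h x \<noteq> dl_eval ?L d x} \<le> card {x\<in>subc n ?\<sigma>'. h x \<noteq> dl_eval L' d x}"
            using finite_subc[of n ?\<sigma>'] by (intro card_mono) auto
          hence "real (card {x\<in>?C. h x \<noteq> dl_eval ?L d x}) * 2^Suc j
              \<le> 2 * (real (card {x\<in>subc n ?\<sigma>'. h x \<noteq> dl_eval L' d x}) * 2^j)" by simp
          also have "\<dots> \<le> 2 * real (card (subc n ?\<sigma>'))" using IH(4) h by simp
          finally show ?thesis using half by simp
        qed
        show ?thesis using IH(1) GM cM IH(3) rfree err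
          by (intro exI[of _ ?L] exI[of _ d] exI[of _ M']) auto
      qed
    qed
  qed
qed

end


context ctx begin

definition BB :: "real \<Rightarrow> real" where
  "BB c = \<alpha> * (c/4 + NN/2 + min c (8*\<alpha>*NN))"

definition lam :: real where "lam = camp (2 * real n) 2 * \<alpha>"

lemma lam_eq: "lam = (1 + 2 * real n + 4 * real n ^ 2) * \<alpha>"
  by (simp add: lam_def numeral_2_eq_2 algebra_simps power2_eq_square)

lemma lam_nonneg: "lam \<ge> 0" using apos by (simp add: lam_eq)

lemma nlam: "real n * lam \<le> 7/200"
proof -
  have n1': "real n \<ge> 1" using n1 by simp
  have q1: "real n ^ 1 \<le> real n ^ 2" by (rule power_increasing) (use n1' in auto)
  have q2: "real n ^ 2 \<le> real n ^ 3" by (rule power_increasing) (use n1' in auto)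
  have q3: "real n ^ 3 \<le> real n ^ 4" by (rule power_increasing) (use n1' in auto)
  have p2: "real n \<le> real n ^ 2" "real n ^ 2 \<le> real n ^ 3" "real n ^ 3 \<le> real n ^ 4"
    using q1 q2 q3 by (simp_all only: power_one_right)
  have "real n * (1 + 2 * real n + 4 * real n ^ 2) = real n + 2 * real n ^ 2 + 4 * real n ^ 3"
    by (simp add: algebra_simps power2_eq_square power3_eq_cube)
  also have "\<dots> \<le> 7 * real n ^ 4" using p2 by linarith
  finally have "real n * (1 + 2 * real n + 4 * real n ^ 2) * \<alpha> \<le> 7 * real n ^ 4 * \<alpha>"
    using apos by (intro mult_right_mono) auto
  also have "\<dots> \<le> 7/200" using a_n4 by simp
  finally show ?thesis by (simp add: lam_eq mult.assoc)
qed

lemma na: "real n * \<alpha> \<le> 1/200"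
proof -
  have n1': "real n \<ge> 1" using n1 by simp
  have "real n \<le> real n ^ 4" using n1' by (metis one_le_numeral power_increasing power_one_right)
  hence "real n * \<alpha> \<le> real n ^ 4 * \<alpha>" using apos by (intro mult_right_mono) auto
  thus ?thesis using a_n4 by (simp add: mult.commute)
qed

lemma sqa: "(4 * real n + 4)^2 * \<alpha> \<le> 64/200"
proof -
  have n1': "real n \<ge> 1" using n1 by simp
  have q1: "real n ^ 1 \<le> real n ^ 2" by (rule power_increasing) (use n1' in auto)
  hence "4 * real n + 4 \<le> 8 * real n ^ 2" using n1' by (simp only: power_one_right)
  hence "(4 * real n + 4)^2 \<le> (8 * real n ^ 2)^2" by (intro power_mono) auto
  also have "\<dots> = 64 * real n ^ 4" by (simp add: power_mult_distrib flip: power_mult)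
  finally have "(4 * real n + 4)^2 * \<alpha> \<le> 64 * real n ^ 4 * \<alpha>" using apos by (intro mult_right_mono) auto
  moreover have "64 * real n ^ 4 * \<alpha> = 64 * (\<alpha> * real n ^ 4)" by simp
  ultimately show ?thesis using a_n4 by linarith
qed

lemma BB_ge: "c \<ge> 0 \<Longrightarrow> \<alpha> * NN / 2 \<le> BB c"
proof -
  assume c: "c \<ge> 0"
  have "0 \<le> min c (8*\<alpha>*NN)" using c apos NN_pos by simp
  hence "NN/2 \<le> c/4 + NN/2 + min c (8*\<alpha>*NN)" using c by linarith
  hence "\<alpha> * (NN/2) \<le> BB c" unfolding BB_def using apos by (intro mult_left_mono) auto
  thus ?thesis by simp
qed

lemma BB_nonneg: "c \<ge> 0 \<Longrightarrow> 0 \<le> BB c"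
  using BB_ge[of c] apos NN_pos by (smt (verit) divide_nonneg_pos mult_pos_pos)

lemma BB_step:
  assumes q: "\<alpha> * NN \<le> q"
  shows "(if 4*\<alpha>*NN \<le> q then \<alpha>*q/4 else \<alpha>*q) + BB q \<le> BB (2*q)"
proof -
  have aN: "\<alpha> * NN > 0" using apos NN_pos by simp
  have q0: "q \<ge> 0" using q aN by linarith
  show ?thesis
  proof (cases "4*\<alpha>*NN \<le> q")
    case True
    have "min q (8*\<alpha>*NN) \<le> min (2*q) (8*\<alpha>*NN)" using q0 by simp
    hence "q/4 + (q/4 + NN/2 + min q (8*\<alpha>*NN)) \<le> 2*q/4 + NN/2 + min (2*q) (8*\<alpha>*NN)" by simp
    hence "\<alpha> * (q/4 + (q/4 + NN/2 + min q (8*\<alpha>*NN))) \<le> \<alpha> * (2*q/4 + NN/2 + min (2*q) (8*\<alpha>*NN))"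
      using apos by (intro mult_left_mono) auto
    thus ?thesis using True by (simp add: BB_def algebra_simps)
  next
    case False
    have m1: "min q (8*\<alpha>*NN) = q" using False aN by simp
    have m2: "min (2*q) (8*\<alpha>*NN) = 2*q" using False aN by simp
    have "q + (q/4 + NN/2 + q) \<le> 2*q/4 + NN/2 + 2*q" using q0 by simp
    hence "\<alpha> * (q + (q/4 + NN/2 + q)) \<le> \<alpha> * (2*q/4 + NN/2 + 2*q)"
      using apos by (intro mult_left_mono) auto
    thus ?thesis using False m1 m2 by (simp add: BB_def algebra_simps)
  qed
qed

lemma BB_final: "BB NN \<le> \<alpha> * NN"
proof -
  have "min NN (8*\<alpha>*NN) \<le> 8*\<alpha>*NN" by simp
  also have "\<dots> \<le> 8 * (1/200) * NN" using a_le NN_pos by (intro mult_right_mono) auto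
  finally have "NN/4 + NN/2 + min NN (8*\<alpha>*NN) \<le> NN" by simp
  thus ?thesis unfolding BB_def using apos by (simp add: mult_left_mono)
qed

lemma endgame:
  assumes E: "freev n \<sigma> = {} \<or> real (card (subc n \<sigma>)) < 2*\<alpha>*NN" and MT: "M \<subseteq> T"
    and Mc: "(1 - real n * lam) * card T \<le> real (card M)"
  shows "\<exists>L d M'. M' \<subseteq> M \<and> (1 - real n * lam) * card T \<le> real (card M') * (4*real n+4)^2 \<and>
    (\<forall>lb\<in>set L. fst (fst lb) < n) \<and>
    (\<forall>h\<in>M'. real (card {x\<in>subc n \<sigma>. h x \<noteq> dl_eval L d x}) \<le> BB (real (card (subc n \<sigma>))))"
proof -
  have finM: "finite M" using finite_subset[OF MT Tfin] .
  have MH: "M \<subseteq> H_DL n" using MT TH by auto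
  obtain L d M' where X: "M' \<subseteq> M \<and> card M \<le> card M' * (4*n+4)^2 \<and>
   (\<forall>lb\<in>set L. fst (fst lb) < n) \<and>
   (\<forall>h\<in>M'. real (card {x\<in>subc n \<sigma>. h x \<noteq> dl_eval L d x}) * 2^2 \<le> real (card (subc n \<sigma>)))"
    using exact[of 2, THEN spec[of _ \<sigma>], THEN spec[of _ M], THEN mp, THEN mp, OF finM MH]
    by (elim exE) (rule that, assumption)
  have "real (card M) \<le> real (card M' * (4*n+4)^2)" using X of_nat_mono by blast
  hence cM: "real (card M) \<le> real (card M') * (4*real n+4)^2" by simp
  have err: "real (card {x\<in>subc n \<sigma>. h x \<noteq> dl_eval L d x}) \<le> BB (real (card (subc n \<sigma>)))"
    if h: "h \<in> M'" for h
  proof -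
    let ?e = "card {x\<in>subc n \<sigma>. h x \<noteq> dl_eval L d x}"
    have e4: "real ?e * 4 \<le> real (card (subc n \<sigma>))" using X h by simp
    from E show ?thesis
    proof
      assume "freev n \<sigma> = {}"
      hence "real (card (subc n \<sigma>)) \<le> 1" using subc_nofree by simp
      hence "real ?e * 4 \<le> 1" using e4 by linarith
      hence "?e = 0" by simp
      thus ?thesis using BB_nonneg by simp
    next
      assume "real (card (subc n \<sigma>)) < 2*\<alpha>*NN"
      hence "real ?e < \<alpha> * NN / 2" using e4 by simp
      thus ?thesis using BB_ge[of "real (card (subc n \<sigma>))"] by simp
    qed
  qed
  show ?thesis using X Mc cM err
    by (intro exI[of _ L] exI[of _ d] exI[of _ M']) auto
qed

end


context ctx begin

lemma main: "\<forall>\<sigma> M. card (freev n \<sigma>) = k \<longrightarrow> M \<subseteq> T \<longrightarrow>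
    (1 - real (n - k) * lam) * card T \<le> real (card M) \<longrightarrow>
    (\<exists>L d M'. M' \<subseteq> M \<and> (1 - real n * lam) * card T \<le> real (card M') * (4*real n+4)^2 \<and>
      (\<forall>lb\<in>set L. fst (fst lb) < n) \<and>
      (\<forall>h\<in>M'. real (card {x\<in>subc n \<sigma>. h x \<noteq> dl_eval L d x}) \<le> BB (real (card (subc n \<sigma>)))))"
proof (induction k)
  case 0
  show ?case
  proof (intro allI impI)
    fix \<sigma> and M :: "(bool list \<Rightarrow> bool) set"
    assume a: "card (freev n \<sigma>) = 0" "M \<subseteq> T" "(1 - real (n - 0) * lam) * card T \<le> real (card M)"
    have "freev n \<sigma> = {}" using a(1) finite_freev by simp
    thus "\<exists>L d M'. M' \<subseteq> M \<and> (1 - real n * lam) * card T \<le> real (card M') * (4*real n+4)^2 \<and>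
      (\<forall>lb\<in>set L. fst (fst lb) < n) \<and>
      (\<forall>h\<in>M'. real (card {x\<in>subc n \<sigma>. h x \<noteq> dl_eval L d x}) \<le> BB (real (card (subc n \<sigma>))))"
      using endgame[of \<sigma> M] a by simp
  qed
next
  case (Suc k)
  show ?case
  proof (intro allI impI)
    fix \<sigma> and M :: "(bool list \<Rightarrow> bool) set"
    let ?C = "subc n \<sigma>"
    assume a: "card (freev n \<sigma>) = Suc k" "M \<subseteq> T" "(1 - real (n - Suc k) * lam) * card T \<le> real (card M)"
    have kn: "Suc k \<le> n" using a(1) card_freev_le[of n \<sigma>] by simp
    have "real (n - Suc k) * lam \<le> real n * lam" using lam_nonneg by (intro mult_right_mono) auto
    hence "(1 - real n * lam) * card T \<le> (1 - real (n - Suc k) * lam) * card T"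
      by (intro mult_right_mono) auto
    hence Mge: "(1 - real n * lam) * card T \<le> real (card M)" using a(3) by linarith
    show "\<exists>L d M'. M' \<subseteq> M \<and> (1 - real n * lam) * card T \<le> real (card M') * (4*real n+4)^2 \<and>
      (\<forall>lb\<in>set L. fst (fst lb) < n) \<and>
      (\<forall>h\<in>M'. real (card {x\<in>?C. h x \<noteq> dl_eval L d x}) \<le> BB (real (card ?C)))"
    proof (cases "real (card ?C) < 2*\<alpha>*NN")
      case True
      thus ?thesis using endgame[OF _ a(2) Mge] by blast
    next
      case False
      hence cge: "2*\<alpha>*NN \<le> real (card ?C)" by simp
      have finM: "finite M" using finite_subset[OF a(2) Tfin] .
      have "freev n \<sigma> \<noteq> {}" using a(1) by auto
      then obtain r0 where r0: "r0 < n" "\<sigma> r0 = None" by (auto simp: freev_def)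
      let ?K = "{0..<n} \<times> (UNIV::bool set) \<times> (UNIV::bool set)"
      let ?Q = "\<lambda>h t. fst t < n \<and> \<sigma> (fst t) = None \<and>
         (\<forall>x\<in>?C. x ! fst t = fst (snd t) \<longrightarrow> h x = snd (snd t))"
      have ex: "\<forall>h\<in>M. \<exists>t. t \<in> ?K \<and> ?Q h t"
      proof
        fix h assume "h \<in> M"
        hence "h \<in> H_DL n" using a(2) TH by auto
        from dl_struct[OF this, of \<sigma>] show "\<exists>t. t \<in> ?K \<and> ?Q h t"
        proof
          assume "\<exists>b. \<forall>x\<in>?C. h x = b"
          then obtain b where "\<forall>x\<in>?C. h x = b" by blast
          thus ?thesis using r0 by (intro exI[of _ "(r0, True, b)"]) auto
        next
          assume "\<exists>r p b. r < n \<and> \<sigma> r = None \<and> (\<forall>x\<in>?C. x ! r = p \<longrightarrow> h x = b)"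
          then obtain r p b where "r < n \<and> \<sigma> r = None \<and> (\<forall>x\<in>?C. x ! r = p \<longrightarrow> h x = b)" by blast
          thus ?thesis by (intro exI[of _ "(r, p, b)"]) auto
        qed
      qed
      from bchoice[OF ex] obtain f where f: "\<forall>h\<in>M. f h \<in> ?K \<and> ?Q h (f h)" ..
      have finK: "finite ?K" by simp
      have Kne: "?K \<noteq> {}" using n1 by auto
      have u4: "(UNIV :: (bool \<times> bool) set) = {(False,False),(False,True),(True,False),(True,True)}"
        by auto
      have "card (UNIV :: (bool \<times> bool) set) = 4" by (simp add: u4)
      hence cardK: "card ?K = 4*n" by (simp add: card_cartesian_product)
      have fK: "\<forall>h\<in>M. f h \<in> ?K" using f by blast
      obtain t where t: "t \<in> ?K" "card M \<le> card ?K * card {h\<in>M. f h = t}"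
        using pigeon[OF finK Kne finM fK] by blast
      obtain r p b where rpb: "t = (r, p, b)" by (metis prod.collapse)
      define G where "G = {h\<in>M. f h = t}"
      have "card M \<le> card ?K * card G" using t(2) unfolding G_def .
      hence "card M \<le> 4 * n * card G" unfolding cardK .
      hence cG: "real (card M) \<le> 4 * real n * real (card G)"
        using of_nat_mono by fastforce
      have GM: "G \<subseteq> M" by (auto simp: G_def)
      have GT: "G \<subseteq> T" using GM a(2) by auto
      have Gq: "\<forall>h\<in>G. ?Q h (r, p, b)" using f rpb by (auto simp: G_def)
      have Gbig: "\<alpha> * card T \<le> real (card G)"
      proof -
        have "4 * (real n * \<alpha>) * card T \<le> 4 * (1/200) * card T"
          using na by (intro mult_right_mono) auto
        also have "\<dots> \<le> (1 - real n * lam) * card T"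
          using nlam by (intro mult_right_mono) auto
        also have "\<dots> \<le> 4 * real n * real (card G)" using Mge cG by linarith
        finally have "(4 * real n) * (\<alpha> * card T) \<le> (4 * real n) * real (card G)"
          by (simp add: algebra_simps)
        thus ?thesis using n1 by (simp add: mult_le_cancel_left)
      qed
      have "G \<noteq> {}"
      proof
        assume "G = {}"
        hence "\<alpha> * card T \<le> 0" using Gbig by simp
        thus False using apos cardT_pos by (simp add: mult_le_0_iff)
      qed
      then obtain h0 where "h0 \<in> G" by auto
      hence rfree: "r < n" "\<sigma> r = None" using Gq by auto
      let ?\<sigma>P = "\<sigma>(r := Some p)"
      let ?\<sigma>R = "\<sigma>(r := Some (\<not> p))"
      let ?P = "subc n ?\<sigma>P"
      let ?R = "subc n ?\<sigma>R"
      define q where "q = real (card ?P)"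
      have hP: "card ?C = 2 * card ?P" using subc_half[of r n \<sigma> p] rfree by simp
      have hR: "card ?C = 2 * card ?R" using subc_half[of r n \<sigma> "\<not> p"] rfree by simp
      have cq: "real (card ?C) = 2 * q" using hP by (simp add: q_def)
      have Rq: "real (card ?R) = q" using hP hR by (simp add: q_def)
      have Gc: "\<forall>h\<in>G. \<forall>x\<in>?P. h x = b" using Gq rfree by (auto simp: subc_upd)
      define j where "j = (if 4*\<alpha>*NN \<le> q then 2 else (0::nat))"
      have qge: "\<alpha> * NN \<le> q" using cge cq by linarith
      have c1: "2^j * \<alpha> * NN \<le> real (card ?P)"
        using qge by (simp add: j_def q_def)
      define F where "F = {h\<in>M. \<alpha> * card ?P \<le> 2^j * real (card {x\<in>?P. h x \<noteq> b})}"
      have FT: "F \<subseteq> T" using a(2) by (auto simp: F_def)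
      have c4: "\<forall>h\<in>F. \<alpha> * card ?P \<le> 2^j * real (card {x\<in>?P. h x \<noteq> b})" by (auto simp: F_def)
      have cF0: "real (card F) < camp (2 * real n) j * \<alpha> * card T"
        using amp[OF GT Gbig, of j b, THEN spec[of _ ?\<sigma>P], THEN spec[of _ F], THEN mp, THEN mp, THEN mp, THEN mp,
          OF c1 Gc FT c4] .
      have "camp (2 * real n) j \<le> camp (2 * real n) 2"
        using n1 by (auto simp: j_def numeral_2_eq_2)
      hence "camp (2 * real n) j * \<alpha> * card T \<le> lam * card T"
        unfolding lam_def using apos cardT_pos by (intro mult_right_mono) auto
      hence cF: "real (card F) < lam * card T" using cF0 by linarith
      define M1 where "M1 = M - F"
      have FM: "F \<subseteq> M" by (auto simp: F_def)
      have "card M1 = card M - card F" using card_Diff_subset[OF finite_subset[OF FM finM] FM] by (simp add: M1_def)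
      moreover have "card F \<le> card M" using card_mono[OF finM FM] .
      ultimately have cM1: "real (card M1) = real (card M) - real (card F)" by simp
      have nk: "real (n - k) = real (n - Suc k) + 1" using kn by simp
      have M1c: "(1 - real (n - k) * lam) * card T \<le> real (card M1)"
        using a(3) cF cM1 nk by (simp add: algebra_simps)
      have M1T: "M1 \<subseteq> T" using a(2) by (auto simp: M1_def)
      have fR: "card (freev n ?\<sigma>R) = k" using card_freev_upd[of r n \<sigma> "\<not> p"] rfree a(1) by simp
      obtain L' d M' where IH0: "M' \<subseteq> M1 \<and> (1 - real n * lam) * card T \<le> real (card M') * (4*real n+4)^2 \<and>
          (\<forall>lb\<in>set L'. fst (fst lb) < n) \<and>
          (\<forall>h\<in>M'. real (card {x\<in>?R. h x \<noteq> dl_eval L' d x}) \<le> BB (real (card ?R)))"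
        using Suc.IH[THEN spec[of _ ?\<sigma>R], THEN spec[of _ M1], THEN mp, THEN mp, THEN mp, OF fR M1T M1c]
        by (elim exE) (rule that, assumption)
      note IH = IH0[THEN conjunct1] IH0[THEN conjunct2, THEN conjunct1]
          IH0[THEN conjunct2, THEN conjunct2, THEN conjunct1] IH0[THEN conjunct2, THEN conjunct2, THEN conjunct2]
      let ?L = "((r, p), b) # L'"
      have err: "real (card {x\<in>?C. h x \<noteq> dl_eval ?L d x}) \<le> BB (real (card ?C))"
        if h: "h \<in> M'" for h
      proof -
        have hM1: "h \<in> M1" using IH(1) h by blast
        hence hM: "h \<in> M" and hF: "h \<notin> F" by (auto simp: M1_def)
        let ?eP = "real (card {x\<in>?P. h x \<noteq> b})"
        let ?eR = "real (card {x\<in>?R. h x \<noteq> dl_eval L' d x})"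
        have eP: "2^j * ?eP < \<alpha> * q" using hF hM by (auto simp: F_def q_def)
        have eP': "?eP \<le> (if 4*\<alpha>*NN \<le> q then \<alpha>*q/4 else \<alpha>*q)"
          using eP by (auto simp: j_def)
        have eR: "?eR \<le> BB q" using IH(4) h Rq by auto
        have sub: "{x\<in>?C. h x \<noteq> dl_eval ?L d x} \<subseteq> {x\<in>?P. h x \<noteq> b} \<union> {x\<in>?R. h x \<noteq> dl_eval L' d x}"
        proof
          fix x assume x: "x \<in> {x\<in>?C. h x \<noteq> dl_eval ?L d x}"
          show "x \<in> {x\<in>?P. h x \<noteq> b} \<union> {x\<in>?R. h x \<noteq> dl_eval L' d x}"
          proof (cases "x ! r = p")
            case True
            thus ?thesis using x rfree by (auto simp: lit_val_def subc_upd)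
          next
            case False
            thus ?thesis using x rfree by (auto simp: lit_val_def subc_upd)
          qed
        qed
        have "card {x\<in>?C. h x \<noteq> dl_eval ?L d x} \<le> card ({x\<in>?P. h x \<noteq> b} \<union> {x\<in>?R. h x \<noteq> dl_eval L' d x})"
          using finite_subc[of n ?\<sigma>P] finite_subc[of n ?\<sigma>R] by (intro card_mono[OF _ sub]) auto
        also have "\<dots> \<le> card {x\<in>?P. h x \<noteq> b} + card {x\<in>?R. h x \<noteq> dl_eval L' d x}"
          by (rule card_Un_le)
        finally have "real (card {x\<in>?C. h x \<noteq> dl_eval ?L d x}) \<le> ?eP + ?eR"
          using of_nat_mono by fastforce
        also have "\<dots> \<le> (if 4*\<alpha>*NN \<le> q then \<alpha>*q/4 else \<alpha>*q) + BB q" using eP' eR by linarith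
        also have "\<dots> \<le> BB (2*q)" using BB_step[OF qge] .
        finally show ?thesis using cq by simp
      qed
      show ?thesis using IH(1) IH(2) IH(3) rfree err
        by (intro exI[of _ ?L] exI[of _ d] exI[of _ M']) (auto simp: M1_def)
    qed
  qed
qed

end


theorem theorem8:
  fixes n :: nat and \<epsilon> :: real
  assumes "n \<ge> 1"
    and "1 / 2 ^ n < \<epsilon>" and "\<epsilon> < 1"
  shows "separable (cube n) (H_DL n) (min (1 / (200 * real n ^ 4)) \<epsilon>) \<epsilon>"
proof -
  define \<alpha> where "\<alpha> = min (1 / (200 * real n ^ 4)) \<epsilon>"
  have epos: "\<epsilon> > 0" using assms(2) by (smt (verit) divide_pos_pos zero_less_power)
  have n4pos: "real n ^ 4 > 0" using assms(1) by simp
  have apos: "\<alpha> > 0" using epos n4pos by (simp add: \<alpha>_def)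
  have asmall: "\<alpha> \<le> 1 / (200 * real n ^ 4)" by (simp add: \<alpha>_def)
  have ae: "\<alpha> \<le> \<epsilon>" by (simp add: \<alpha>_def)
  have emp: "H_DL n \<noteq> {}"
    by (auto simp: H_DL_def intro!: exI[of _ "[]"])
  show ?thesis
    unfolding \<alpha>_def[symmetric] separable_def
  proof (intro allI impI)
    fix T assume TH: "T \<subseteq> H_DL n" and nt: "\<not> tight (cube n) (H_DL n) \<alpha> \<epsilon> T"
    show "\<exists>S T0 T1. S \<subseteq> cube n \<and> T0 \<subseteq> T \<and> T1 \<subseteq> T \<and> T0 \<inter> T1 = {} \<and>
           \<alpha> * real (card (cube n)) \<le> real (card S) \<and>
           \<alpha> * real (card T) \<le> real (card T0) \<and>
           \<alpha> * real (card T) \<le> real (card T1) \<and>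
           \<alpha> \<le> \<bar>density S T0 - density S T1\<bar>"
    proof (rule ccontr)
      assume ns: "\<not> ?thesis"
      have nosep: "\<bar>density S T0 - density S T1\<bar> < \<alpha>"
        if "S \<subseteq> cube n" "T0 \<subseteq> T" "T1 \<subseteq> T" "T0 \<inter> T1 = {}"
          "\<alpha> * real (card (cube n)) \<le> real (card S)" "\<alpha> * real (card T) \<le> real (card T0)"
          "\<alpha> * real (card T) \<le> real (card T1)" for S T0 T1
      proof (rule ccontr)
        assume "\<not> \<bar>density S T0 - density S T1\<bar> < \<alpha>"
        hence "\<alpha> \<le> \<bar>density S T0 - density S T1\<bar>" by simp
        thus False using ns that by blast
      qed
      have cT: "card T \<noteq> 0"
      proof
        assume "card T = 0"
        obtain h where "h \<in> H_DL n" using emp by auto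
        hence "tight (cube n) (H_DL n) \<alpha> \<epsilon> T" using \<open>card T = 0\<close>
          unfolding tight_def by (intro bexI[of _ h]) auto
        thus False using nt by simp
      qed
      hence Tfin: "finite T" and Tne: "T \<noteq> {}" using card_gt_0_iff by blast+
      interpret ctx n \<alpha> T
        by unfold_locales (use assms(1) apos asmall TH Tfin Tne nosep in auto)
      have fr: "card (freev n (\<lambda>_. None)) = n" by (simp add: freev_def)
      have c3: "(1 - real (n - n) * lam) * card T \<le> real (card T)" by simp
      obtain L d M' where X: "M' \<subseteq> T \<and> (1 - real n * lam) * card T \<le> real (card M') * (4*real n+4)^2 \<and>
          (\<forall>lb\<in>set L. fst (fst lb) < n) \<and>
          (\<forall>h\<in>M'. real (card {x\<in>subc n (\<lambda>_. None). h x \<noteq> dl_eval L d x}) \<le> BB (real (card (subc n (\<lambda>_. None)))))"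
        using main[of n, THEN spec[of _ "\<lambda>_. None"], THEN spec[of _ T], THEN mp, THEN mp, THEN mp, OF fr subset_refl c3]
        by (elim exE) (rule that, assumption)
      define hs where "hs = (\<lambda>x. if x \<in> cube n then dl_eval L d x else False)"
      have hsH: "hs \<in> H_DL n" using X unfolding hs_def H_DL_def by blast
      have close: "M' \<subseteq> T \<inter> ball_H (cube n) (H_DL n) \<epsilon> hs"
      proof
        fix h assume h: "h \<in> M'"
        have hT: "h \<in> T" using X h by blast
        have "{x \<in> cube n. hs x \<noteq> h x} = {x\<in>subc n (\<lambda>_. None). h x \<noteq> dl_eval L d x}"
          by (auto simp: subc_None hs_def)
        hence "real (card {x \<in> cube n. hs x \<noteq> h x}) \<le> BB (real (card (cube n)))"
          using X h subc_None by auto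
        also have "\<dots> \<le> \<alpha> * real (card (cube n))" by (rule BB_final)
        also have "\<dots> \<le> \<epsilon> * real (card (cube n))" using ae by (intro mult_right_mono) auto
        finally have "eps_close (cube n) \<epsilon> hs h" by (simp add: eps_close_def)
        thus "h \<in> T \<inter> ball_H (cube n) (H_DL n) \<epsilon> hs" using hT TH by (auto simp: ball_H_def)
      qed
      have "real (card M') \<le> real (card (T \<inter> ball_H (cube n) (H_DL n) \<epsilon> hs))"
        using card_mono[OF _ close] Tfin by simp
      moreover have "\<alpha> * real (card T) \<le> real (card M')"
      proof -
        have sq0: "(4*real n+4)^2 > 0" by simp
        have "(4*real n+4)^2 * \<alpha> * card T \<le> 64/200 * card T"
          using sqa by (intro mult_right_mono) auto
        also have "\<dots> \<le> (1 - real n * lam) * card T"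
          using nlam by (intro mult_right_mono) auto
        also have "\<dots> \<le> real (card M') * (4*real n+4)^2" using X by blast
        finally have "(4*real n+4)^2 * (\<alpha> * card T) \<le> (4*real n+4)^2 * real (card M')"
          by (simp add: algebra_simps)
        thus ?thesis using sq0 by (simp add: mult_le_cancel_left)
      qed
      ultimately have "tight (cube n) (H_DL n) \<alpha> \<epsilon> T"
        unfolding tight_def using hsH by (intro bexI[of _ hs]) auto
      thus False using nt by simp
    qed
  qed
qed


end
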